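(* Let $\theta\in[\pi,2\pi)$. Then for all $x,y\in S_\theta$, $p_{S_\theta}(x,y)\le s_{S_\theta}(x,y)$, and this inequality is sharp.
   Context: $S_\theta=\{x\in\mathbb{C}:0<\arg(x)<\theta\}$. For a domain $G\subsetneq\mathbb{C}$, $d_G(x)=\inf\{|x-z|:z\in\partial G\}$, $s_G(x,y)=\frac{|x-y|}{\inf_{z\in\partial G}(|x-z|+|z-y|)}$, $p_G(x,y)=\frac{|x-y|}{\sqrt{|x-y|^2+4d_G(x)d_G(y)}}$. *)

theory Defs
  imports "HOL-Complex_Analysis.Complex_Analysis"
begin

text \<open>Argument normalised to the interval [0, 2 pi); the sector S_theta with
  theta >= pi requires this convention.\<close>
definition arg02 :: "complex \<Rightarrow> real" where
  "arg02 x = (if Arg x < 0 then Arg x + 2 * pi else Arg x)"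

definition sector :: "real \<Rightarrow> complex set" where
  "sector \<theta> = {x. 0 < arg02 x \<and> arg02 x < \<theta>}"

definition bdist :: "complex set \<Rightarrow> complex \<Rightarrow> real" where
  "bdist G x = Inf {cmod (x - z) | z. z \<in> frontier G}"

definition triangular_ratio :: "complex set \<Rightarrow> complex \<Rightarrow> complex \<Rightarrow> real" where
  "triangular_ratio G x y =
     cmod (x - y) / Inf {cmod (x - z) + cmod (z - y) | z. z \<in> frontier G}"

definition point_pair :: "complex set \<Rightarrow> complex \<Rightarrow> complex \<Rightarrow> real" where
  "point_pair G x y =
     cmod (x - y) / sqrt ((cmod (x - y))\<^sup>2 + 4 * bdist G x * bdist G y)"

end

theory Submission
  imports Defs
begin

lemma arg02_props:
  assumes "w \<noteq> 0"
  shows "w = of_real (cmod w) * exp (\<i> * of_real (arg02 w))" "0 \<le> arg02 w" "arg02 w < 2*pi"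
proof -
  have e: "w = of_real(norm w) * exp(\<i> * Arg w)" using Arg_eq assms by blast
  have b: "-pi < Arg w" "Arg w \<le> pi" using mpi_less_Arg Arg_le_pi by auto
  show "0 \<le> arg02 w" "arg02 w < 2*pi" using b by (auto simp: arg02_def)
  have "exp (\<i> * of_real (Arg w + 2*pi)) = exp (\<i> * of_real (Arg w))"
    using exp_two_pi_i by (simp add: distrib_left exp_add mult.commute mult.left_commute)
  then show "w = of_real (cmod w) * exp (\<i> * of_real (arg02 w))"
    using e by (auto simp: arg02_def)
qed

lemma trig_char:
  assumes "pi \<le> th" "th < 2*pi" "0 \<le> t" "t < 2*pi"
  shows "(0 < t \<and> t < th) \<longleftrightarrow> (sin t > 0 \<or> sin (th - t) > 0)"
proof
  assume h: "0 < t \<and> t < th"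
  show "sin t > 0 \<or> sin (th - t) > 0"
  proof (cases "t < pi")
    case True then show ?thesis using h sin_gt_zero by auto
  next
    case False then show ?thesis using h assms by (intro disjI2 sin_gt_zero) auto
  qed
next
  assume h: "sin t > 0 \<or> sin (th - t) > 0"
  show "0 < t \<and> t < th"
  proof (cases "sin t > 0")
    case True
    have "t < pi"
    proof (rule ccontr)
      assume "\<not> t < pi"
      then have "sin t \<le> 0" using assms sin_le_zero by force
      then show False using True by simp
    qed
    moreover have "t \<noteq> 0" using True by auto
    ultimately show ?thesis using assms by auto
  next
    case False
    then have s: "sin (th - t) > 0" using h by auto
    have "th - t < pi"
    proof (rule ccontr)
      assume "\<not> th - t < pi"
      then have "sin (th - t) \<le> 0" using assms sin_le_zero by force
      then show False using s by simp
    qed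
    moreover have "0 < th - t"
    proof (rule ccontr)
      assume "\<not> 0 < th - t"
      then have "sin (t - th) \<ge> 0" using assms by (intro sin_ge_zero) auto
      then have "sin (th - t) \<le> 0" by (metis minus_diff_eq neg_0_le_iff_le sin_minus)
      then show False using s by simp
    qed
    ultimately show ?thesis using assms by auto
  qed
qed

lemma sector_char:
  assumes "pi \<le> th" "th < 2*pi"
  shows "sector th = {w. Im w > 0 \<or> Re w * sin th - Im w * cos th > 0}"
proof (intro set_eqI iffI)
  fix w assume "w \<in> sector th"
  then have w: "0 < arg02 w" "arg02 w < th" by (auto simp: sector_def)
  then have "w \<noteq> 0" by (auto simp: arg02_def Arg_zero)
  note P = arg02_props[OF this]
  define t where "t = arg02 w"
  have re: "Re w = cmod w * cos t" and im: "Im w = cmod w * sin t"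
    using arg_cong[OF P(1), of Re] arg_cong[OF P(1), of Im] unfolding t_def by (simp_all add: Re_exp Im_exp)
  have "sin t > 0 \<or> sin (th - t) > 0" using trig_char[OF assms P(2,3)] w unfolding t_def by blast
  moreover have "Re w * sin th - Im w * cos th = cmod w * sin (th - t)"
    by (simp add: re im sin_diff algebra_simps)
  moreover have "cmod w > 0" using \<open>w \<noteq> 0\<close> by simp
  ultimately have "Im w > 0 \<or> Re w * sin th - Im w * cos th > 0"
    by (metis im mult_pos_pos)
  then show "w \<in> {w. Im w > 0 \<or> Re w * sin th - Im w * cos th > 0}" by simp
next
  fix w assume "w \<in> {w. Im w > 0 \<or> Re w * sin th - Im w * cos th > 0}"
  then have h: "Im w > 0 \<or> Re w * sin th - Im w * cos th > 0" by simp
  then have "w \<noteq> 0" by auto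
  note P = arg02_props[OF this]
  define t where "t = arg02 w"
  have re: "Re w = cmod w * cos t" and im: "Im w = cmod w * sin t"
    using arg_cong[OF P(1), of Re] arg_cong[OF P(1), of Im] unfolding t_def by (simp_all add: Re_exp Im_exp)
  have "Re w * sin th - Im w * cos th = cmod w * sin (th - t)"
    by (simp add: re im sin_diff algebra_simps)
  moreover have c: "cmod w > 0" using \<open>w \<noteq> 0\<close> by simp
  moreover have "Im w > 0 \<Longrightarrow> sin t > 0" using c im by (simp add: zero_less_mult_iff)
  moreover have "cmod w * sin (th - t) > 0 \<Longrightarrow> sin (th - t) > 0" using c by (simp add: zero_less_mult_iff)
  ultimately have "sin t > 0 \<or> sin (th - t) > 0" using h by auto
  then show "w \<in> sector th" using trig_char[OF assms P(2,3)] unfolding t_def sector_def by blast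
qed

lemma minimizer:
  fixes K :: "complex set" and x y :: complex
  assumes Kc: "closed K" and K0: "0 \<in> K"
  shows "\<exists>z\<in>K. \<forall>w\<in>K. cmod (x - z) + cmod (z - y) \<le> cmod (x - w) + cmod (w - y)"
proof -
  define f where "f w = cmod (x - w) + cmod (w - y)" for w
  define R where "R = cmod x + cmod y + f 0"
  have "compact (K \<inter> cball 0 R)" using Kc by (simp add: compact_Int_closed closed_Int_compact)
  moreover have z0: "0 \<in> K \<inter> cball 0 R" using K0 by (auto simp: R_def f_def)
  moreover have "continuous_on (K \<inter> cball 0 R) f" unfolding f_def by (intro continuous_intros)
  ultimately obtain z where z: "z \<in> K \<inter> cball 0 R" "\<forall>w\<in>K \<inter> cball 0 R. f z \<le> f w"
    using continuous_attains_inf by blast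
  have "f z \<le> f w" if "w \<in> K" for w
  proof (cases "w \<in> cball 0 R")
    case True then show ?thesis using z that by auto
  next
    case False
    then have "cmod w > R" by auto
    moreover have "f w \<ge> 2 * cmod w - cmod x - cmod y"
      unfolding f_def using norm_triangle_ineq2[of w x] norm_triangle_ineq2[of w y]
      by (smt (verit) norm_minus_commute)
    moreover have "f z \<le> f 0" using z(2) z0 by blast
    moreover have "f 0 \<ge> 0" by (simp add: f_def)
    moreover have "f 0 = cmod x + cmod y" by (simp add: f_def)
    ultimately show ?thesis using norm_ge_zero[of x] norm_ge_zero[of y] unfolding R_def by linarith
  qed
  then show ?thesis using z unfolding f_def by blast
qed

lemma deriv_norm_line:
  fixes p d :: complex
  assumes "p \<noteq> 0"
  shows "((\<lambda>t. cmod (p + t *\<^sub>R d)) has_real_derivative inner (sgn p) d) (at 0)"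
proof -
  have "((\<lambda>t. p + t *\<^sub>R d) has_derivative (\<lambda>h. h *\<^sub>R d)) (at 0)"
    by (auto intro!: derivative_eq_intros)
  moreover have "(norm has_derivative (\<lambda>h. inner (sgn (p + 0 *\<^sub>R d)) h)) (at (p + 0 *\<^sub>R d))"
    using has_derivative_norm[of "p + 0 *\<^sub>R d"] assms by (simp add: inner_commute)
  ultimately have "((\<lambda>t. norm (p + t *\<^sub>R d)) has_derivative (\<lambda>h. inner (sgn (p + 0 *\<^sub>R d)) (h *\<^sub>R d))) (at 0)"
    by (rule has_derivative_compose)
  moreover have "(\<lambda>h. inner (sgn (p + 0 *\<^sub>R d)) (h *\<^sub>R d)) = (*) (inner (sgn p) d)"
    by (auto simp: fun_eq_iff)
  ultimately show ?thesis unfolding has_field_derivative_def by simp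
qed


lemma variational:
  fixes K :: "complex set" and x y z w :: complex
  assumes Kv: "convex K" and zK: "z \<in> K" and wK: "w \<in> K" and xz: "x \<noteq> z" and yz: "y \<noteq> z"
    and zmin: "\<forall>w\<in>K. cmod (x - z) + cmod (z - y) \<le> cmod (x - w) + cmod (w - y)"
  shows "inner (sgn (z - x) + sgn (z - y)) (w - z) \<ge> 0"
proof (rule ccontr)
  define d where "d = w - z"
  define g where "g t = cmod ((z - x) + t *\<^sub>R d) + cmod ((z - y) + t *\<^sub>R d)" for t
  assume "\<not> ?thesis"
  then have neg: "inner (sgn (z - x)) d + inner (sgn (z - y)) d < 0" by (simp add: d_def inner_add_left)
  have "(g has_real_derivative inner (sgn (z - x)) d + inner (sgn (z - y)) d) (at 0)"
    unfolding g_def using xz yz by (intro derivative_intros deriv_norm_line) auto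
  from DERIV_neg_dec_right[OF this neg] obtain e where e: "e > 0" "\<forall>h>0. h < e \<longrightarrow> g 0 > g (0 + h)"
    by blast
  define h where "h = min (e/2) (1/2)"
  have h: "0 < h" "h < e" "h \<le> 1" using e by (auto simp: h_def)
  then have "g h < g 0" using e by auto
  moreover have "z + h *\<^sub>R d \<in> K"
  proof -
    have "(1 - h) *\<^sub>R z + h *\<^sub>R w \<in> K" using Kv zK wK h by (intro convexD) auto
    moreover have "(1 - h) *\<^sub>R z + h *\<^sub>R w = z + h *\<^sub>R d" by (simp add: d_def algebra_simps)
    ultimately show ?thesis by simp
  qed
  moreover have "g h = cmod (x - (z + h *\<^sub>R d)) + cmod ((z + h *\<^sub>R d) - y)"
  proof -
    have e1: "(z - x) + h *\<^sub>R d = - (x - (z + h *\<^sub>R d))" by (simp add: algebra_simps)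
    have e2: "(z - y) + h *\<^sub>R d = (z + h *\<^sub>R d) - y" by (simp add: algebra_simps)
    show ?thesis unfolding g_def e1 e2 norm_minus_cancel ..
  qed
  moreover have "g 0 = cmod (x - z) + cmod (z - y)" unfolding g_def by (simp add: norm_minus_commute)
  moreover have "cmod (x - z) + cmod (z - y) \<le> cmod (x - (z + h *\<^sub>R d)) + cmod ((z + h *\<^sub>R d) - y)"
    using zmin \<open>z + h *\<^sub>R d \<in> K\<close> by blast
  ultimately show False by linarith
qed


lemma geom_main:
  fixes K :: "complex set" and x y :: complex
  assumes Kc: "closed K" and Kv: "convex K" and K0: "0 \<in> K" and K2: "\<forall>w\<in>K. 2 *\<^sub>R w \<in> K"
    and x: "x \<notin> K" and y: "y \<notin> K" and dx: "0 \<le> dx" and dy: "0 \<le> dy"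
    and hx: "\<forall>n. norm n = 1 \<longrightarrow> (\<forall>w\<in>K. inner n w \<le> 0) \<longrightarrow> inner n x \<le> dx"
    and hy: "\<forall>n. norm n = 1 \<longrightarrow> (\<forall>w\<in>K. inner n w \<le> 0) \<longrightarrow> inner n y \<le> dy"
  shows "\<exists>z\<in>K. z \<in> closure (- K) \<and> (cmod (x - z) + cmod (z - y))\<^sup>2 \<le> (cmod (x - y))\<^sup>2 + 4 * dx * dy"
proof -
  obtain z where zK: "z \<in> K" and zmin: "\<forall>w\<in>K. cmod (x - z) + cmod (z - y) \<le> cmod (x - w) + cmod (w - y)"
    using minimizer[OF Kc K0] by blast
  have xz: "x \<noteq> z" and yz: "y \<noteq> z" using x y zK by auto
  define p where "p = z - x"
  define q where "q = z - y"
  define u where "u = sgn p"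
  define v where "v = sgn q"
  define P where "P = cmod p"
  define Q where "Q = cmod q"
  have P0: "P > 0" and Q0: "Q > 0" using xz yz by (auto simp: P_def Q_def p_def q_def)
  have pu: "p = P *\<^sub>R u" and qv: "q = Q *\<^sub>R v" using P0 Q0 by (simp_all add: P_def Q_def u_def v_def sgn_div_norm)
  have nu: "norm u = 1" and nv: "norm v = 1" using xz yz by (auto simp: u_def v_def p_def q_def norm_sgn)
  define m where "m = - (u + v)"
  have var: "inner m (w - z) \<le> 0" if "w \<in> K" for w
    using variational[OF Kv zK that xz yz zmin] by (simp add: m_def u_def v_def p_def q_def inner_diff_left inner_add_left)
  have mz: "inner m z = 0"
    using var[OF K0] var[OF K2[rule_format, OF zK]] by (simp add: inner_diff_right algebra_simps)
  have mw: "inner m w \<le> 0" if "w \<in> K" for w using var[OF that] mz by (simp add: inner_diff_right)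
  show ?thesis
  proof (cases "m = 0")
    case True
    then have vu: "v = - u" by (simp add: m_def eq_neg_iff_add_eq_0 add.commute)
    have "x - y = q - p" by (simp add: p_def q_def)
    also have "\<dots> = - ((P + Q) *\<^sub>R u)" by (simp add: pu qv vu algebra_simps)
    finally have "cmod (x - y) = P + Q" using nu P0 Q0 by simp
    then have "dist x y = dist x z + dist z y"
      by (simp add: P_def Q_def p_def q_def dist_norm norm_minus_commute)
    then have zseg: "z \<in> closed_segment x y" using between between_mem_segment by blast
    have "closed_segment x z \<inter> frontier K \<noteq> {}"
      by (rule connected_Int_frontier) (use zK x in auto)
    then obtain w where w1: "w \<in> closed_segment x z" and w2: "w \<in> frontier K" by blast
    have wK: "w \<in> K" using w2 Kc frontier_subset_closed by blast
    have wc: "w \<in> closure (- K)" using w2 frontier_complement[of K] frontier_subset_closed[of "- K"]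
      by (metis closed_closure closure_subset frontier_closures inf_sup_ord(2) subset_iff)
    have "w \<in> closed_segment x y" using w1 zseg subset_closed_segment by blast
    then have "dist x y = dist x w + dist w y" using between between_mem_segment
      by (metis between_def)
    then have "cmod (x - w) + cmod (w - y) = cmod (x - y)" by (simp add: dist_norm)
    moreover have "0 \<le> 4 * dx * dy" using dx dy by simp
    ultimately show ?thesis using wK wc by (intro bexI[of _ w]) auto
  next
    case False
    define N where "N = norm m"
    have N0: "N > 0" using False by (simp add: N_def)
    define n where "n = sgn m"
    have nn: "norm n = 1" using False by (simp add: n_def norm_sgn)
    have ninner: "inner n w = inner m w / N" for w by (simp add: n_def N_def sgn_div_norm divide_inverse_commute)
    have nK: "\<forall>w\<in>K. inner n w \<le> 0" using mw N0 by (simp add: ninner divide_nonpos_pos)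
    define c where "c = 1 + inner u v"
    have uu: "inner u u = 1" by (metis nu power2_norm_eq_inner one_power2)
    have vv: "inner v v = 1" by (metis nv power2_norm_eq_inner one_power2)
    have muu: "inner m u = - c" and mvv: "inner m v = - c"
      by (simp_all add: m_def c_def inner_add_left inner_minus_left inner_diff_right inner_minus_right uu vv inner_commute)
    have "N^2 = inner m m" by (simp add: N_def power2_norm_eq_inner)
    also have "\<dots> = inner u u + inner v v + 2 * inner u v"
      by (simp add: m_def inner_add_left inner_add_right inner_minus_left inner_minus_right inner_diff_left inner_diff_right inner_commute)
    finally have N2: "N^2 = 2 * c" by (simp add: uu vv c_def)
    have c0: "c > 0" using N2 N0 by (smt (verit) zero_less_power)
    have mx: "inner m x = P * c"
    proof -
      have "x = z - p" by (simp add: p_def)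
      then have "x = z - P *\<^sub>R u" using pu by simp
      then show ?thesis using mz muu by (simp add: inner_diff_right)
    qed
    have my: "inner m y = Q * c"
    proof -
      have "y = z - q" by (simp add: q_def)
      then have "y = z - Q *\<^sub>R v" using qv by simp
      then show ?thesis using mz mvv by (simp add: inner_diff_right)
    qed
    have nx: "inner n x = P * c / N" and ny: "inner n y = Q * c / N" using mx my by (simp_all add: ninner)
    have nx0: "inner n x \<ge> 0" and ny0: "inner n y \<ge> 0" using P0 Q0 c0 N0 nx ny by simp_all
    have prod: "inner n x * inner n y = P * Q * c / 2"
      using N2 N0 c0 by (simp add: nx ny power2_eq_square field_simps)
    have xy2: "(cmod (x - y))\<^sup>2 = P^2 + Q^2 - 2 * P * Q * inner u v"
    proof -
      have "x - y = q - p" by (simp add: p_def q_def)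
      then have "x - y = Q *\<^sub>R v - P *\<^sub>R u" using pu qv by simp
      then have "(cmod (x - y))\<^sup>2 = inner (Q *\<^sub>R v - P *\<^sub>R u) (Q *\<^sub>R v - P *\<^sub>R u)"
        by (simp add: power2_norm_eq_inner)
      also have "\<dots> = Q^2 * inner v v + P^2 * inner u u - 2 * P * Q * inner u v"
        by (simp add: inner_diff_left inner_diff_right inner_commute power2_eq_square algebra_simps)
      finally show ?thesis using uu vv by simp
    qed
    have fz: "cmod (x - z) + cmod (z - y) = P + Q"
      by (simp add: P_def Q_def p_def q_def norm_minus_commute)
    have A: "4 * (inner n x * inner n y) = 2*P*Q + 2*P*Q*inner u v" using prod by (simp add: c_def algebra_simps)
    have B: "(P + Q)^2 = P^2 + Q^2 + 2*P*Q" by (simp add: power2_sum)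
    have "(P + Q)^2 = (cmod (x - y))\<^sup>2 + 4 * (inner n x * inner n y)"
      using A B xy2 by linarith
    also have "\<dots> \<le> (cmod (x - y))\<^sup>2 + 4 * (dx * dy)"
    proof -
      have "inner n x * inner n y \<le> dx * dy"
      proof (rule mult_mono)
        show "inner n x \<le> dx" using hx nn nK by blast
        show "inner n y \<le> dy" using hy nn nK by blast
      qed (use nx0 ny0 dx dy in auto)
      then show ?thesis by linarith
    qed
    finally have bound: "(cmod (x - z) + cmod (z - y))\<^sup>2 \<le> (cmod (x - y))\<^sup>2 + 4 * dx * dy"
      by (simp add: fz mult.assoc)
    have nz: "inner n z = 0" using mz by (simp add: ninner)
    have "z \<in> closure (- K)"
      unfolding closure_approachable
    proof (intro allI impI)
      fix e :: real assume e: "e > 0"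
      define w where "w = z + (e/2) *\<^sub>R n"
      have nn1: "inner n n = 1" by (metis nn power2_norm_eq_inner one_power2)
      have "inner n w = e/2" using nz nn1 by (simp add: w_def inner_add_right)
      then have "w \<in> - K" using nK e by force
      moreover have "dist w z < e" using nn e by (simp add: w_def dist_norm)
      ultimately show "\<exists>w\<in>- K. dist w z < e" by blast
    qed
    then show ?thesis using zK bound by blast
  qed
qed


lemma frontier_bound:
  fixes K :: "complex set" and n x w :: complex
  assumes "norm n = 1" "\<forall>w\<in>K. inner n w \<le> 0" "w \<in> K"
  shows "inner n x \<le> cmod (x - w)"
proof -
  have a: "inner n (x - w) \<le> norm (x - w)" using norm_cauchy_schwarz[of n "x - w"] assms(1) by simp
  have b: "inner n (x - w) = inner n x - inner n w" by (simp add: inner_diff_right)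
  have c: "inner n w \<le> 0" using assms(2,3) by blast
  show ?thesis using a b c by linarith
qed

theorem theorem3p9:
  fixes \<theta> :: real
  assumes "pi \<le> \<theta>" and "\<theta> < 2 * pi"
  shows "(\<forall>x \<in> sector \<theta>. \<forall>y \<in> sector \<theta>.
            point_pair (sector \<theta>) x y \<le> triangular_ratio (sector \<theta>) x y)
       \<and> (\<forall>c < 1. \<exists>x \<in> sector \<theta>. \<exists>y \<in> sector \<theta>. x \<noteq> y \<and>
            point_pair (sector \<theta>) x y > c * triangular_ratio (sector \<theta>) x y)"
proof -
  define S where "S = sector \<theta>"
  define n1 :: complex where "n1 = \<i>"
  define n2 :: complex where "n2 = Complex (sin \<theta>) (- cos \<theta>)"
  define K where "K = {w. inner n1 w \<le> 0} \<inter> {w. inner n2 w \<le> 0}"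
  have in1: "inner n1 w = Im w" for w by (simp add: n1_def inner_complex_def)
  have in2: "inner n2 w = Re w * sin \<theta> - Im w * cos \<theta>" for w by (simp add: n2_def inner_complex_def)
  have nn1: "norm n1 = 1" by (simp add: n1_def)
  have nn2: "norm n2 = 1" by (simp add: n2_def cmod_def)
  have SK: "S = - K" unfolding S_def sector_char[OF assms] K_def in1 in2 by auto
  have Kc: "closed K" unfolding K_def by (intro closed_Int closed_halfspace_le)
  have Kv: "convex K" unfolding K_def by (intro convex_Int convex_halfspace_le)
  have K0: "0 \<in> K" by (simp add: K_def)
  have K2: "\<forall>w\<in>K. 2 *\<^sub>R w \<in> K" by (auto simp: K_def)
  have n1K: "\<forall>w\<in>K. inner n1 w \<le> 0" and n2K: "\<forall>w\<in>K. inner n2 w \<le> 0" by (auto simp: K_def)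
  have frS: "frontier S = frontier K" by (simp add: SK)
  have frK: "frontier K \<subseteq> K" using Kc frontier_subset_closed by blast
  have frontier_char: "z \<in> frontier K" if "z \<in> K" "z \<in> closure (- K)" for z
  proof -
    have "z \<notin> interior K" using that(2) closure_complement[of K] by auto
    then show ?thesis using that(1) closure_subset[of K] by (auto simp: frontier_def)
  qed
  have f0: "0 \<in> frontier S"
  proof -
    have "0 \<in> closure (- K)" unfolding closure_approachable
    proof (intro allI impI)
      fix e :: real assume e: "e > 0"
      have "(e/2) *\<^sub>R \<i> \<in> - K" using e by (simp add: K_def in1)
      moreover have "dist ((e/2) *\<^sub>R \<i>) 0 < e" using e by simp
      ultimately show "\<exists>w\<in>- K. dist w 0 < e" by blast
    qed
    then show ?thesis using frontier_char K0 frS by simp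
  qed
  have xpos: "\<exists>n. norm n = 1 \<and> (\<forall>w\<in>K. inner n w \<le> 0) \<and> inner n x > 0" if "x \<in> S" for x
  proof -
    have "x \<notin> K" using that SK by auto
    then have "inner n1 x > 0 \<or> inner n2 x > 0" by (auto simp: K_def)
    then show ?thesis using nn1 nn2 n1K n2K by blast
  qed
  define D where "D x = {cmod (x - z) | z. z \<in> frontier S}" for x
  define T where "T x y = {cmod (x - z) + cmod (z - y) | z. z \<in> frontier S}" for x y
  have bd: "bdist S x = Inf (D x)" for x by (simp add: bdist_def D_def)
  have tr: "triangular_ratio S x y = cmod (x - y) / Inf (T x y)" for x y
    by (simp add: triangular_ratio_def T_def)
  have pp: "point_pair S x y = cmod (x - y) / sqrt ((cmod (x - y))\<^sup>2 + 4 * bdist S x * bdist S y)" for x y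
    by (simp add: point_pair_def)
  have Dne: "D x \<noteq> {}" for x using f0 by (auto simp: D_def)
  have Tne: "T x y \<noteq> {}" for x y using f0 by (auto simp: T_def)
  have Dbdd: "bdd_below (D x)" for x by (auto simp: D_def intro!: bdd_belowI[of _ 0])
  have Tbdd: "bdd_below (T x y)" for x y by (auto simp: T_def intro!: bdd_belowI[of _ 0])
  have bd0: "bdist S x \<ge> 0" for x unfolding bd using Dne by (intro cInf_greatest) (auto simp: D_def)
  have bdn: "inner n x \<le> bdist S x" if "norm n = 1" "\<forall>w\<in>K. inner n w \<le> 0" for n x
    unfolding bd using Dne
  proof (intro cInf_greatest)
    fix d assume "d \<in> D x"
    then obtain z where z: "d = cmod (x - z)" "z \<in> frontier S" by (auto simp: D_def)
    then have "z \<in> K" using frS frK by auto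
    then show "inner n x \<le> d" using frontier_bound[OF that] z by simp
  qed auto
  have Tlow: "inner n x \<le> Inf (T x y)" if "norm n = 1" "\<forall>w\<in>K. inner n w \<le> 0" for n x y
    using Tne
  proof (intro cInf_greatest)
    fix d assume "d \<in> T x y"
    then obtain z where z: "d = cmod (x - z) + cmod (z - y)" "z \<in> frontier S" by (auto simp: T_def)
    then have "z \<in> K" using frS frK by auto
    then show "inner n x \<le> d" using frontier_bound[OF that] z by (smt (verit) norm_ge_zero)
  qed auto
  have part1: "point_pair S x y \<le> triangular_ratio S x y" if x: "x \<in> S" and y: "y \<in> S" for x y
  proof -
    have xK: "x \<notin> K" and yK: "y \<notin> K" using x y SK by auto
    obtain z where zK: "z \<in> K" and zc: "z \<in> closure (- K)"
      and zb: "(cmod (x - z) + cmod (z - y))\<^sup>2 \<le> (cmod (x - y))\<^sup>2 + 4 * bdist S x * bdist S y"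
      using geom_main[OF Kc Kv K0 K2 xK yK bd0 bd0, of x y] bdn by blast
    have zf: "z \<in> frontier S" using frontier_char[OF zK zc] frS by simp
    have "Inf (T x y) \<le> cmod (x - z) + cmod (z - y)"
    proof (rule cInf_lower)
      show "cmod (x - z) + cmod (z - y) \<in> T x y" unfolding T_def mem_Collect_eq by (intro exI[of _ z] conjI) (use zf in auto)
    qed (rule Tbdd)
    also have "\<dots> \<le> sqrt ((cmod (x - y))\<^sup>2 + 4 * bdist S x * bdist S y)"
      using zb by (intro real_le_rsqrt)
    finally have le: "Inf (T x y) \<le> sqrt ((cmod (x - y))\<^sup>2 + 4 * bdist S x * bdist S y)" .
    obtain n where "norm n = 1" "\<forall>w\<in>K. inner n w \<le> 0" "inner n x > 0" using xpos[OF x] by blast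
    then have pos: "Inf (T x y) > 0" using Tlow[of n x y] by linarith
    show ?thesis unfolding pp tr
    proof (rule divide_left_mono)
      have "sqrt ((cmod (x - y))\<^sup>2 + 4 * bdist S x * bdist S y) > 0" using le pos by linarith
      then show "0 < sqrt ((cmod (x - y))\<^sup>2 + 4 * bdist S x * bdist S y) * Inf (T x y)"
        using pos by (rule mult_pos_pos)
    qed (use le in auto)
  qed
  have part2: "\<exists>x \<in> S. \<exists>y \<in> S. x \<noteq> y \<and> point_pair S x y > c * triangular_ratio S x y" if c: "c < 1" for c
  proof -
    define x :: complex where "x = \<i>"
    define y :: complex where "y = 2 * \<i>"
    have xS: "x \<in> S" and yS: "y \<in> S" by (auto simp: SK K_def in1 x_def y_def)
    have "cmod (x - 0) \<in> D x" unfolding D_def mem_Collect_eq by (intro exI[of _ 0] conjI) (use f0 in auto)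
    then have "bdist S x \<le> cmod (x - 0)" unfolding bd using Dbdd by (intro cInf_lower)
    then have dx: "bdist S x \<le> 1" by (simp add: x_def)
    have "cmod (y - 0) \<in> D y" unfolding D_def mem_Collect_eq by (intro exI[of _ 0] conjI) (use f0 in auto)
    then have "bdist S y \<le> cmod (y - 0)" unfolding bd using Dbdd by (intro cInf_lower)
    then have dy: "bdist S y \<le> 2" by (simp add: y_def)
    have "cmod (x - 0) + cmod (0 - y) \<in> T x y" unfolding T_def mem_Collect_eq by (intro exI[of _ 0] conjI) (use f0 in auto)
    then have "Inf (T x y) \<le> cmod (x - 0) + cmod (0 - y)" using Tbdd by (intro cInf_lower)
    then have T1: "Inf (T x y) \<le> 3" by (simp add: x_def y_def)
    have T2: "3 \<le> Inf (T x y)" using Tne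
    proof (intro cInf_greatest)
      fix d assume "d \<in> T x y"
      then obtain z where z: "d = cmod (x - z) + cmod (z - y)" "z \<in> frontier S" by (auto simp: T_def)
      then have "z \<in> K" using frS frK by auto
      then have "Im z \<le> 0" by (simp add: K_def in1)
      moreover have "\<bar>Im (x - z)\<bar> \<le> cmod (x - z)" by (rule abs_Im_le_cmod)
      moreover have "\<bar>Im (z - y)\<bar> \<le> cmod (z - y)" by (rule abs_Im_le_cmod)
      ultimately show "3 \<le> d" using z by (simp add: x_def y_def)
    qed auto
    have xy: "cmod (x - y) = 1" by (simp add: x_def y_def)
    have tr3: "triangular_ratio S x y = 1/3" using T1 T2 by (simp add: tr xy)
    have "bdist S x * bdist S y \<le> 1 * 2"
      by (rule mult_mono) (use dx dy bd0[of x] bd0[of y] in auto)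
    then have "1 + 4 * bdist S x * bdist S y \<le> 3^2" by simp
    moreover have "0 \<le> 4 * bdist S x * bdist S y" using bd0[of x] bd0[of y] by simp
    ultimately have sq: "sqrt (1 + 4 * bdist S x * bdist S y) \<le> sqrt (3^2)"
      by (intro real_sqrt_le_mono) simp
    have sq3: "sqrt ((3::real)^2) = 3" by simp
    have sqp: "sqrt (1 + 4 * bdist S x * bdist S y) > 0"
      using \<open>0 \<le> 4 * bdist S x * bdist S y\<close> by simp
    have "1/3 \<le> 1 / sqrt (1 + 4 * bdist S x * bdist S y)"
      using sq sqp unfolding sq3 by (intro divide_left_mono) auto
    then have p3: "1/3 \<le> point_pair S x y" unfolding pp xy by simp
    have "c * (1/3) < 1/3" using c by simp
    then have lt: "c * triangular_ratio S x y < point_pair S x y" using p3 unfolding tr3 by linarith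
    have "x \<noteq> y" by (simp add: x_def y_def)
    then show ?thesis using xS yS lt by blast
  qed
  show ?thesis using part1 part2 unfolding S_def by blast
qed

end
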